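(* Let $p=(p_1,\dots,p_d)$ and $q=(q_1,\dots,q_d)$ be probability vectors with all $q_i>0$ and $p_i\ge\tau$ for all $i$, where $0<\tau\le1/3$. Then $$\sum_{i=1}^d(\log p_i-\log q_i)^2\le\frac{12\log(\tau)^2}{\tau}\,\mathrm{KL}(p\|q)+\frac{9}{\tau^2}\,\mathrm{KL}(p\|q)^2,$$ where $\mathrm{KL}(p\|q)=\sum_i p_i\log(p_i/q_i)$. *)

theory Defs
  imports Complex_Main
begin

definition prob_vec :: "nat \<Rightarrow> (nat \<Rightarrow> real) \<Rightarrow> bool" where
  "prob_vec d p \<longleftrightarrow> (\<forall>i\<in>{1..d}. p i \<ge> 0) \<and> (\<Sum>i=1..d. p i) = 1"

definition KL :: "nat \<Rightarrow> (nat \<Rightarrow> real) \<Rightarrow> (nat \<Rightarrow> real) \<Rightarrow> real" where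
  "KL d p q = (\<Sum>i=1..d. p i * ln (p i / q i))"

end

theory Submission
  imports Defs
begin

lemma exp_cubic_lower: "1 + t + t^2/2 + t^3/6 \<le> exp (t::real)"
proof -
  obtain u where "exp t = (\<Sum>m<4. (t ^ m) / fact m) + (exp u / fact 4) * t ^ 4"
    using Maclaurin_exp_le[of t 4] by blast
  moreover have "(\<Sum>m<4. (t ^ m) / fact m) = 1 + t + t^2/2 + t^3/6"
    by (simp add: eval_nat_numeral fact_numeral)
  moreover have "0 \<le> (exp u / fact 4) * t ^ 4" by simp
  ultimately show ?thesis by linarith
qed

lemma key_ineq: "(t::real)^2 \<le> 6 * (exp t - 1 - t) + 4 * (exp t - 1 - t)^2"
proof (cases "t \<ge> -2")
  case True
  have "t^3/6 \<ge> -(t^2/3)"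
  proof -
    have "t^2 * (t+2) \<ge> 0" using True by simp
    then show ?thesis by (simp add: power3_eq_cube power2_eq_square algebra_simps)
  qed
  then have "exp t - 1 - t \<ge> t^2/6" using exp_cubic_lower[of t] by linarith
  then have "t^2 \<le> 6 * (exp t - 1 - t)" by (simp add: field_simps)
  moreover have "0 \<le> 4 * (exp t - 1 - t)^2" by simp
  ultimately show ?thesis by (meson add_increasing2)
next
  case False
  have g: "exp t - 1 - t \<ge> -t/2" using False exp_gt_zero[of t] by linarith
  have "-t/2 \<ge> 0" using False by simp
  then have "(-t/2)^2 \<le> (exp t - 1 - t)^2" using g power_mono by blast
  moreover have "exp t - 1 - t \<ge> 0" using g False by linarith
  ultimately show ?thesis by (simp add: power2_eq_square)
qed

theorem mainTheorem17:
  fixes d :: nat and p q :: "nat \<Rightarrow> real" and \<tau> :: real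
  assumes "prob_vec d p" and "prob_vec d q"
    and "\<forall>i\<in>{1..d}. q i > 0"
    and "\<forall>i\<in>{1..d}. p i \<ge> \<tau>"
    and "0 < \<tau>" and "\<tau> \<le> 1/3"
  shows "(\<Sum>i=1..d. (ln (p i) - ln (q i))^2)
           \<le> 12 * (ln \<tau>)^2 / \<tau> * KL d p q + 9 / \<tau>^2 * (KL d p q)^2"
proof -
  define t where "t i = ln (q i) - ln (p i)" for i
  define g where "g i = exp (t i) - 1 - t i" for i
  define K where "K = KL d p q"
  have pp: "p i > 0" if "i \<in> {1..d}" for i using assms(4,5) that by force
  have qp: "q i > 0" if "i \<in> {1..d}" for i using assms(3) that by force
  have et: "exp (t i) = q i / p i" if "i \<in> {1..d}" for i
    using pp[OF that] qp[OF that] by (simp add: t_def exp_diff)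
  have gnn: "g i \<ge> 0" for i unfolding g_def using exp_ge_add_one_self[of "t i"] by linarith
  have sp: "(\<Sum>i=1..d. p i) = 1" and sq: "(\<Sum>i=1..d. q i) = 1"
    using assms(1,2) by (auto simp: prob_vec_def)
  have "(\<Sum>i=1..d. p i * g i) = (\<Sum>i=1..d. q i - p i + p i * ln (p i / q i))"
  proof (rule sum.cong)
    fix i assume i: "i \<in> {1..d}"
    have "ln (p i / q i) = - t i" using pp[OF i] qp[OF i] by (simp add: t_def ln_div)
    then show "p i * g i = q i - p i + p i * ln (p i / q i)"
      using pp[OF i] by (simp add: g_def et[OF i] algebra_simps)
  qed simp
  also have "\<dots> = K" using sp sq by (simp add: sum.distrib sum_subtractf K_def KL_def)
  finally have KS: "(\<Sum>i=1..d. p i * g i) = K" .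
  have K0: "K \<ge> 0" unfolding KS[symmetric] using gnn pp by (intro sum_nonneg) (auto intro: mult_nonneg_nonneg less_imp_le)
  have gle: "\<tau> * g i \<le> p i * g i" if "i \<in> {1..d}" for i
    using assms(4) that gnn[of i] by (simp add: mult_right_mono)
  have sumg: "\<tau> * (\<Sum>i=1..d. g i) \<le> K"
  proof -
    have "(\<Sum>i=1..d. \<tau> * g i) \<le> (\<Sum>i=1..d. p i * g i)" using gle by (rule sum_mono)
    then show ?thesis using KS by (simp add: sum_distrib_left)
  qed
  have gi: "\<tau> * g i \<le> K" if "i \<in> {1..d}" for i
  proof -
    have "p i * g i \<le> (\<Sum>i=1..d. p i * g i)"
      using that gnn pp by (intro member_le_sum) (auto intro: mult_nonneg_nonneg less_imp_le)
    then show ?thesis using gle[OF that] KS by linarith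
  qed
  have g2: "\<tau> * (g i)^2 \<le> K * g i" if "i \<in> {1..d}" for i
    using mult_right_mono[OF gi[OF that] gnn[of i]] by (simp add: power2_eq_square algebra_simps)
  have sumg2: "\<tau>^2 * (\<Sum>i=1..d. (g i)^2) \<le> K^2"
  proof -
    have "\<tau> * (\<Sum>i=1..d. (g i)^2) \<le> K * (\<Sum>i=1..d. g i)"
    proof -
      have "(\<Sum>i=1..d. \<tau> * (g i)^2) \<le> (\<Sum>i=1..d. K * g i)" using g2 by (rule sum_mono)
      then show ?thesis by (simp add: sum_distrib_left)
    qed
    then have "\<tau> * (\<tau> * (\<Sum>i=1..d. (g i)^2)) \<le> \<tau> * (K * (\<Sum>i=1..d. g i))"
      using assms(5) by simp
    also have "\<dots> \<le> K * K" using sumg K0 assms(5)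
      by (metis mult.left_commute mult_left_mono)
    finally show ?thesis by (simp add: power2_eq_square algebra_simps)
  qed
  have "(\<Sum>i=1..d. (ln (p i) - ln (q i))^2) = (\<Sum>i=1..d. (t i)^2)"
    by (simp add: t_def power2_commute)
  also have "\<dots> \<le> (\<Sum>i=1..d. 6 * g i + 4 * (g i)^2)"
    by (intro sum_mono) (unfold g_def, rule key_ineq)
  also have "\<dots> = 6 * (\<Sum>i=1..d. g i) + 4 * (\<Sum>i=1..d. (g i)^2)"
    by (simp add: sum.distrib sum_distrib_left)
  also have "\<dots> \<le> 6 * (K / \<tau>) + 4 * (K^2 / \<tau>^2)"
  proof -
    have "(\<Sum>i=1..d. g i) \<le> K / \<tau>" using sumg assms(5) by (simp add: field_simps)
    moreover have "(\<Sum>i=1..d. (g i)^2) \<le> K^2 / \<tau>^2" using sumg2 assms(5) by (simp add: field_simps)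
    ultimately show ?thesis by linarith
  qed
  also have "\<dots> \<le> 12 * (ln \<tau>)^2 / \<tau> * K + 9 / \<tau>^2 * K^2"
  proof -
    have "ln \<tau> \<le> ln (1/3)" using assms(5,6) by simp
    moreover have "ln (1/3::real) = - ln 3" by (simp add: ln_div)
    moreover have "ln (3::real) \<ge> 1"
      using exp_le by (subst ln_ge_iff) auto
    ultimately have "ln \<tau> \<le> -1" by linarith
    then have "1 \<le> (- ln \<tau>)^2" by (intro one_le_power) linarith
    then have "(ln \<tau>)^2 \<ge> 1" by simp
    then have "K * 1 \<le> K * (2 * (ln \<tau>)^2)" using K0 by (intro mult_left_mono) auto
    then have "6 * (K / \<tau>) \<le> 12 * (ln \<tau>)^2 / \<tau> * K"
      using K0 assms(5) by (simp add: field_simps)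
    moreover have "4 * (K^2 / \<tau>^2) \<le> 9 / \<tau>^2 * K^2"
      using assms(5) by (simp add: field_simps)
    ultimately show ?thesis by linarith
  qed
  finally show ?thesis by (simp add: K_def)
qed

end
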